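(* Let $G$ be a nice graph, $V_4$ the set of vertices of degree at least four in $G$, $\mathcal{P}$ a path partition of $G$, $\mathcal{P}_4\subseteq\mathcal{P}$ the subfamily of paths visiting at least one vertex of $V_4$, $\ell\in\mathbb{N}$, and $(\mathcal{T},d)$ a $(G,V_4,\ell)$-pattern encoding $\mathcal{P}_4$. Then $|\mathcal{P}|\ge \frac{\mathrm{odd}(G)+\mathrm{odd}(\mathcal{T},d)}{2}+|\mathcal{T}|.$
   Context: A path partition of $G$ is a collection of pairwise edge-disjoint paths whose edge sets together cover $E(G)$. $\mathrm{odd}(H)$ is the number of odd-degree vertices of $H$. Graphs are finite, simple, undirected; subcubic means maximum degree $\le 3$. A pan cycle of $G$ is a cycle with a unique vertex of degree $3$ in $G$, the others of degree $2$ in $G$; a bull cycle is a cycle with exactly two vertices of degree $3$ in $G$, the others of degree $2$ in $G$. $G$ is nice if it is connected, not subcubic, has no pan cycles, and all bull cycles are triangles. $N_G[S]$, $N_G(S)$ denote closed/open neighbourhoods. Terminal collection for a family $\mathcal{Q}$ of edge-disjoint paths: a set $U\subseteq V(G)$ with $N_G[V_4]\subseteq U$, containing both endpoints of every path of $\mathcal{Q}$, and such that for all $u,v\in U$, if two distinct paths of $\mathcal{Q}$ both visit $u$ and $v$, then one of them visits another vertex of $U$ between $u$ and $v$. Traces: $X_\ell=\{x_1,\dots,x_\ell\}$ is a set of variables. A $(G,V_4,\ell)$-trace is a sequence over $N_G[V_4]\cup X_\ell$ with no repeated symbol and no variable adjacent to a symbol of $V_4$. $\mathsf{edges}(T)$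 is the set of unordered consecutive pairs of $T$ containing a symbol of $V_4$; $\mathsf{ends}(T)$ is the set of other unordered consecutive pairs. $\deg_T(y)$ is $0$ if $y$ does not occur in $T$, $1$ if $y$ is the first or last element of $T$, $2$ otherwise. Pattern: a pair $(\mathcal{T},d)$, $\mathcal{T}$ a collection of $(G,V_4,\ell)$-traces, $d\colon X_\ell\to\{1,2,3\}$, with: the sets $\mathsf{ends}(T)$ pairwise disjoint and the sets $\mathsf{edges}(T)$ pairwise disjoint over distinct $T\in\mathcal{T}$; $\bigcup_T\mathsf{edges}(T)$ equals the set of edges incident to $V_4$; $\sum_T\deg_T(x_i)\le d(x_i)$ for all $x_i$; $\sum_T\deg_T(v)\le\deg_G(v)$ for all $v\in N_G(V_4)$. Encoding: $(\mathcal{T},d)$ encodes a family $\mathcal{Q}$ of edge-disjoint paths if for some terminal collection $U$ for $\mathcal{Q}$, with $V_X=U\setminus N_G[V_4]$, $\ell=|V_X|$ and a bijection $f\colon X_\ell\to V_X$, $\mathcal{T}$ consists of one trace $T_P$ per $P\in\mathcal{Q}$, obtained by orienting $P$, listing in order its vertices in $N_G[V_4]\cup V_X$ and replacing each $v\in V_X$ by $f^{-1}(v)$, and $d(x_i)=\deg_G(f(x_i))$. Odd number of a pattern: for $y\in N_G[V_4]\cup X_\ell$ let $D(y)=\deg_G(y)$ if $y\in N_G[V_4]$ and $D(y)=d(y)$ if $y\in X_\ell$; $y$ gains oddity if $D(y)$ is even and $\sum_{T}\deg_T(y)$ is odd, and loses oddity if $D(y)$ is odd and $\sum_T\deg_T(y)$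 is odd. $\mathrm{odd}(\mathcal{T},d)$ is the number of elements gaining oddity minus the number losing oddity. *)

theory Defs
  imports Complex_Main
begin

definition graph :: "'a set \<Rightarrow> 'a set set \<Rightarrow> bool" where
  "graph V E \<longleftrightarrow> finite V \<and> (\<forall>e\<in>E. \<exists>u v. e = {u, v} \<and> u \<noteq> v \<and> u \<in> V \<and> v \<in> V)"

definition deg :: "'a set set \<Rightarrow> 'a \<Rightarrow> nat" where
  "deg E v = card {e\<in>E. v \<in> e}"

definition odd_vertices :: "'a set \<Rightarrow> 'a set set \<Rightarrow> nat" where
  "odd_vertices V E = card {v\<in>V. odd (deg E v)}"

definition connected_graph :: "'a set \<Rightarrow> 'a set set \<Rightarrow> bool" where
  "connected_graph V E \<longleftrightarrow> (\<forall>u\<in>V. \<forall>v\<in>V. (u, v) \<in> {(x, y). {x, y} \<in> E}\<^sup>*)"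

definition subcubic :: "'a set \<Rightarrow> 'a set set \<Rightarrow> bool" where
  "subcubic V E \<longleftrightarrow> (\<forall>v\<in>V. deg E v \<le> 3)"

definition closed_nbhd :: "'a set \<Rightarrow> 'a set set \<Rightarrow> 'a set \<Rightarrow> 'a set" where
  "closed_nbhd V E S = S \<union> {v\<in>V. \<exists>u\<in>S. {u, v} \<in> E}"

definition open_nbhd :: "'a set \<Rightarrow> 'a set set \<Rightarrow> 'a set \<Rightarrow> 'a set" where
  "open_nbhd V E S = closed_nbhd V E S - S"

definition V4 :: "'a set \<Rightarrow> 'a set set \<Rightarrow> 'a set" where
  "V4 V E = {v\<in>V. 4 \<le> deg E v}"

definition is_cycle :: "'a set \<Rightarrow> 'a set set \<Rightarrow> 'a list \<Rightarrow> bool" where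
  "is_cycle V E cs \<longleftrightarrow> 3 \<le> length cs \<and> distinct cs \<and> set cs \<subseteq> V \<and>
     (\<forall>i<length cs. {cs ! i, cs ! ((i + 1) mod length cs)} \<in> E)"

definition pan_cycle :: "'a set \<Rightarrow> 'a set set \<Rightarrow> 'a list \<Rightarrow> bool" where
  "pan_cycle V E cs \<longleftrightarrow> is_cycle V E cs \<and>
     card {v \<in> set cs. deg E v = 3} = 1 \<and>
     (\<forall>v\<in>set cs. deg E v = 2 \<or> deg E v = 3)"

definition bull_cycle :: "'a set \<Rightarrow> 'a set set \<Rightarrow> 'a list \<Rightarrow> bool" where
  "bull_cycle V E cs \<longleftrightarrow> is_cycle V E cs \<and>
     card {v \<in> set cs. deg E v = 3} = 2 \<and>
     (\<forall>v\<in>set cs. deg E v = 2 \<or> deg E v = 3)"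

definition nice :: "'a set \<Rightarrow> 'a set set \<Rightarrow> bool" where
  "nice V E \<longleftrightarrow> connected_graph V E \<and> \<not> subcubic V E \<and>
     (\<forall>cs. \<not> pan_cycle V E cs) \<and>
     (\<forall>cs. bull_cycle V E cs \<longrightarrow> length cs = 3)"

definition is_path :: "'a set \<Rightarrow> 'a set set \<Rightarrow> 'a list \<Rightarrow> bool" where
  "is_path V E P \<longleftrightarrow> 2 \<le> length P \<and> distinct P \<and> set P \<subseteq> V \<and>
     (\<forall>i. Suc i < length P \<longrightarrow> {P ! i, P ! Suc i} \<in> E)"

definition path_edges :: "'a list \<Rightarrow> 'a set set" where
  "path_edges P = {{P ! i, P ! Suc i} | i. Suc i < length P}"

definition path_partition :: "'a set \<Rightarrow> 'a set set \<Rightarrow> 'a list set \<Rightarrow> bool" where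
  "path_partition V E \<P> \<longleftrightarrow> (\<forall>P\<in>\<P>. is_path V E P) \<and>
     pairwise (\<lambda>P Q. path_edges P \<inter> path_edges Q = {}) \<P> \<and>
     \<Union> (path_edges ` \<P>) = E"

text \<open>Symbols: \<open>Inl v\<close> for a vertex v, \<open>Inr i\<close> for the variable x_i (1 \<le> i \<le> l).\<close>

definition symbols :: "'a set \<Rightarrow> 'a set set \<Rightarrow> nat \<Rightarrow> ('a + nat) set" where
  "symbols V E l = Inl ` closed_nbhd V E (V4 V E) \<union> Inr ` {1..l}"

definition is_var :: "('a + nat) \<Rightarrow> bool" where
  "is_var y \<longleftrightarrow> (\<exists>i. y = Inr i)"

definition is_trace :: "'a set \<Rightarrow> 'a set set \<Rightarrow> nat \<Rightarrow> ('a + nat) list \<Rightarrow> bool" where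
  "is_trace V E l T \<longleftrightarrow> distinct T \<and> set T \<subseteq> symbols V E l \<and>
     (\<forall>i. Suc i < length T \<longrightarrow>
        \<not> (is_var (T ! i) \<and> T ! Suc i \<in> Inl ` V4 V E) \<and>
        \<not> (T ! i \<in> Inl ` V4 V E \<and> is_var (T ! Suc i)))"

definition consec_pairs :: "('a + nat) list \<Rightarrow> ('a + nat) set set" where
  "consec_pairs T = {{T ! i, T ! Suc i} | i. Suc i < length T}"

definition trace_edges :: "'a set \<Rightarrow> 'a set set \<Rightarrow> ('a + nat) list \<Rightarrow> ('a + nat) set set" where
  "trace_edges V E T = {p \<in> consec_pairs T. p \<inter> Inl ` V4 V E \<noteq> {}}"

definition trace_ends :: "'a set \<Rightarrow> 'a set set \<Rightarrow> ('a + nat) list \<Rightarrow> ('a + nat) set set" where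
  "trace_ends V E T = consec_pairs T - trace_edges V E T"

definition trace_deg :: "('a + nat) list \<Rightarrow> ('a + nat) \<Rightarrow> nat" where
  "trace_deg T y = (if y \<notin> set T then 0 else if y = hd T \<or> y = last T then 1 else 2)"

definition is_pattern ::
  "'a set \<Rightarrow> 'a set set \<Rightarrow> nat \<Rightarrow> ('a + nat) list set \<Rightarrow> (nat \<Rightarrow> nat) \<Rightarrow> bool" where
  "is_pattern V E l \<T> d \<longleftrightarrow>
     (\<forall>T\<in>\<T>. is_trace V E l T) \<and>
     (\<forall>i\<in>{1..l}. d i \<in> {1, 2, 3}) \<and>
     pairwise (\<lambda>T T'. trace_ends V E T \<inter> trace_ends V E T' = {}) \<T> \<and>
     pairwise (\<lambda>T T'. trace_edges V E T \<inter> trace_edges V E T' = {}) \<T> \<and>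
     \<Union> (trace_edges V E ` \<T>) = (\<lambda>e. Inl ` e) ` {e\<in>E. e \<inter> V4 V E \<noteq> {}} \<and>
     (\<forall>i\<in>{1..l}. (\<Sum>T\<in>\<T>. trace_deg T (Inr i)) \<le> d i) \<and>
     (\<forall>v\<in>open_nbhd V E (V4 V E). (\<Sum>T\<in>\<T>. trace_deg T (Inl v)) \<le> deg E v)"

definition visits_between :: "'a set \<Rightarrow> 'a list \<Rightarrow> 'a \<Rightarrow> 'a \<Rightarrow> bool" where
  "visits_between U P u v \<longleftrightarrow>
     (\<exists>i j k. i < length P \<and> j < length P \<and> k < length P \<and>
        P ! i = u \<and> P ! k = v \<and> P ! j \<in> U \<and> (i < j \<and> j < k \<or> k < j \<and> j < i))"

definition terminal_collection :: "'a set \<Rightarrow> 'a set set \<Rightarrow> 'a list set \<Rightarrow> 'a set \<Rightarrow> bool" where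
  "terminal_collection V E \<Q> U \<longleftrightarrow> U \<subseteq> V \<and>
     closed_nbhd V E (V4 V E) \<subseteq> U \<and>
     (\<forall>P\<in>\<Q>. hd P \<in> U \<and> last P \<in> U) \<and>
     (\<forall>u\<in>U. \<forall>v\<in>U. u \<noteq> v \<longrightarrow> (\<forall>P\<in>\<Q>. \<forall>P'\<in>\<Q>.
        P \<noteq> P' \<and> u \<in> set P \<and> v \<in> set P \<and> u \<in> set P' \<and> v \<in> set P' \<longrightarrow>
        visits_between U P u v \<or> visits_between U P' u v))"

definition trace_of ::
  "'a set \<Rightarrow> 'a set set \<Rightarrow> 'a set \<Rightarrow> nat \<Rightarrow> (nat \<Rightarrow> 'a) \<Rightarrow> 'a list \<Rightarrow> ('a + nat) list" where
  "trace_of V E U l f P =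
     map (\<lambda>v. if v \<in> closed_nbhd V E (V4 V E) then Inl v else Inr (inv_into {1..l} f v))
         (filter (\<lambda>v. v \<in> U) P)"

definition encodes ::
  "'a set \<Rightarrow> 'a set set \<Rightarrow> nat \<Rightarrow> ('a + nat) list set \<Rightarrow> (nat \<Rightarrow> nat) \<Rightarrow> 'a list set \<Rightarrow> bool" where
  "encodes V E l \<T> d \<Q> \<longleftrightarrow>
     (\<exists>U f ori. terminal_collection V E \<Q> U \<and>
        l = card (U - closed_nbhd V E (V4 V E)) \<and>
        bij_betw f {1..l} (U - closed_nbhd V E (V4 V E)) \<and>
        inj_on (\<lambda>P. trace_of V E U l f (if ori P then P else rev P)) \<Q> \<and>
        \<T> = (\<lambda>P. trace_of V E U l f (if ori P then P else rev P)) ` \<Q> \<and>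
        (\<forall>i\<in>{1..l}. d i = deg E (f i)))"

definition pat_D :: "'a set set \<Rightarrow> (nat \<Rightarrow> nat) \<Rightarrow> ('a + nat) \<Rightarrow> nat" where
  "pat_D E d y = (case y of Inl v \<Rightarrow> deg E v | Inr i \<Rightarrow> d i)"

definition pat_S :: "('a + nat) list set \<Rightarrow> ('a + nat) \<Rightarrow> nat" where
  "pat_S \<T> y = (\<Sum>T\<in>\<T>. trace_deg T y)"

definition odd_pattern ::
  "'a set \<Rightarrow> 'a set set \<Rightarrow> nat \<Rightarrow> ('a + nat) list set \<Rightarrow> (nat \<Rightarrow> nat) \<Rightarrow> int" where
  "odd_pattern V E l \<T> d =
     int (card {y\<in>symbols V E l. even (pat_D E d y) \<and> odd (pat_S \<T> y)})
   - int (card {y\<in>symbols V E l. odd (pat_D E d y) \<and> odd (pat_S \<T> y)})"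

end

theory Submission
  imports Defs
begin

lemma path_edges_Cons2: "path_edges (a#b#R) = insert {a,b} (path_edges (b#R))"
  unfolding path_edges_def
  apply (rule set_eqI; rule iffI)
   apply clarsimp
   apply (case_tac i; force)
  apply clarsimp
  apply (erule disjE)
   apply (rule_tac x=0 in exI; simp)
  apply clarsimp
  apply (rule_tac x="Suc i" in exI; simp)
  done

lemma path_edges_single: "path_edges [a] = {}"
  by (simp add: path_edges_def)

lemma path_edges_sub: "e \<in> path_edges P \<Longrightarrow> e \<subseteq> set P"
  by (auto simp: path_edges_def)

lemma finite_path_edges: "finite (path_edges P)"
  proof -
  have "{i. Suc i < length P} \<subseteq> {..<length P}" by auto
  then have "finite {i. Suc i < length P}" using finite_subset by blast
  then show ?thesis unfolding path_edges_def by (rule finite_image_set)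
qed

lemma pdeg_formula: "distinct P \<Longrightarrow> P \<noteq> [] \<Longrightarrow> card {e \<in> path_edges P. v \<in> e} =
   (if v \<in> set P then (if v = hd P then 0 else 1) + (if v = last P then 0 else 1) else 0)"
proof (induction P)
  case Nil then show ?case by simp
next
  case (Cons a Q)
  show ?case
  proof (cases Q)
    case Nil then show ?thesis by (simp add: path_edges_single)
  next
    case (Cons b R)
    have IH: "card {e \<in> path_edges Q. v \<in> e} =
   (if v \<in> set Q then (if v = hd Q then 0 else 1) + (if v = last Q then 0 else 1) else 0)"
      using Cons.IH Cons.prems \<open>Q = b # R\<close> by simp
    have nin: "{a,b} \<notin> path_edges Q" using path_edges_sub[of "{a,b}" Q] Cons.prems by auto
    have pe: "path_edges (a#Q) = insert {a,b} (path_edges Q)" using \<open>Q = b#R\<close> path_edges_Cons2 by simp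
    have fin: "finite {e \<in> path_edges Q. v \<in> e}" using finite_path_edges[of Q] by simp
    have "{e \<in> path_edges (a#Q). v \<in> e} = (if v \<in> {a,b} then insert {a,b} {e \<in> path_edges Q. v \<in> e} else {e \<in> path_edges Q. v \<in> e})"
      using pe by auto
    then have c: "card {e \<in> path_edges (a#Q). v \<in> e} = (if v \<in> {a,b} then Suc (card {e \<in> path_edges Q. v \<in> e}) else card {e \<in> path_edges Q. v \<in> e})"
      using fin nin by simp
    have lQ: "last Q \<in> set Q" using \<open>Q = b#R\<close> by simp
    show ?thesis using c IH Cons.prems \<open>Q = b#R\<close> lQ by (auto split: if_splits)
  qed
qed

lemma hd_ne_last: "distinct P \<Longrightarrow> 2 \<le> length P \<Longrightarrow> hd P \<noteq> last P"
  by (cases P; cases "tl P"; auto)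

lemma pd_val: "distinct P \<Longrightarrow> 2 \<le> length P \<Longrightarrow> card {e \<in> path_edges P. v \<in> e} =
   (if v \<notin> set P then 0 else if v = hd P \<or> v = last P then 1 else 2)"
  using pdeg_formula[of P v] hd_ne_last[of P] by (cases P) auto

lemma odd_sum_ex: "odd (sum g A) \<Longrightarrow> \<exists>a\<in>A. odd ((g a)::nat)"
  using dvd_sum[of A 2 g] by blast

lemma hd_filter: "xs \<noteq> [] \<Longrightarrow> p (hd xs) \<Longrightarrow> hd (filter p xs) = hd xs"
  by (cases xs) auto

lemma last_filter: "xs \<noteq> [] \<Longrightarrow> p (last xs) \<Longrightarrow> last (filter p xs) = last xs"
  by (induction xs rule: rev_induct) auto

theorem lemma21:
  fixes V :: "'a set" and E :: "'a set set" and \<P> :: "'a list set"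
    and l :: nat and \<T> :: "('a + nat) list set" and d :: "nat \<Rightarrow> nat"
  assumes "graph V E"
    and "nice V E"
    and "path_partition V E \<P>"
    and "is_pattern V E l \<T> d"
    and "encodes V E l \<T> d {P\<in>\<P>. set P \<inter> V4 V E \<noteq> {}}"
  shows "real (card \<P>) \<ge>
           (real (odd_vertices V E) + real_of_int (odd_pattern V E l \<T> d)) / 2 + real (card \<T>)"
proof -
  note gr = assms(1) and pp = assms(3) and enc = assms(5)
  define N where "N = closed_nbhd V E (V4 V E)"
  define P4 where "P4 = {P\<in>\<P>. set P \<inter> V4 V E \<noteq> {}}"
  define Pr where "Pr = \<P> - P4"
  obtain U f ori where tc: "terminal_collection V E P4 U"
     and lU: "l = card (U - N)" and bij: "bij_betw f {1..l} (U - N)"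
     and inj: "inj_on (\<lambda>P. trace_of V E U l f (if ori P then P else rev P)) P4"
     and TT: "\<T> = (\<lambda>P. trace_of V E U l f (if ori P then P else rev P)) ` P4"
     and dd: "\<forall>i\<in>{1..l}. d i = deg E (f i)"
    using enc unfolding encodes_def P4_def N_def by blast
  define tr where "tr = (\<lambda>P. trace_of V E U l f (if ori P then P else rev P))"
  define pd :: "'a list \<Rightarrow> 'a \<Rightarrow> nat" where "pd P v = card {e\<in>path_edges P. v\<in>e}" for P v
  define sym :: "'a \<Rightarrow> 'a + nat" where "sym = (\<lambda>v. if v \<in> N then Inl v else Inr (inv_into {1..l} f v))"
  have UV: "U \<subseteq> V" and NU: "N \<subseteq> U" and ends: "\<forall>P\<in>P4. hd P \<in> U \<and> last P \<in> U"
    using tc by (auto simp: terminal_collection_def N_def)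
  have paths: "\<And>P. P\<in>\<P> \<Longrightarrow> is_path V E P"
    and disj: "pairwise (\<lambda>P Q. path_edges P \<inter> path_edges Q = {}) \<P>"
    and cov: "\<Union>(path_edges ` \<P>) = E" using pp by (auto simp: path_partition_def)
  have finV: "finite V" using gr by (simp add: graph_def)
  have "E \<subseteq> Pow V" using gr unfolding graph_def by auto
  then have finE: "finite E" using finV by (meson finite_Pow_iff finite_subset)
  have pe_ne: "path_edges P \<noteq> {}" if "P\<in>\<P>" for P
  proof -
    have "2 \<le> length P" using paths[OF that] by (simp add: is_path_def)
    then have "{P!0, P!Suc 0} \<in> path_edges P" unfolding path_edges_def by force
    then show ?thesis by blast
  qed
  have injpe: "inj_on path_edges \<P>"
  proof (rule inj_onI)
    fix P Q assume "P\<in>\<P>" "Q\<in>\<P>" "path_edges P = path_edges Q"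
    then show "P = Q" using disj pe_ne unfolding pairwise_def by fastforce
  qed
  have "path_edges ` \<P> \<subseteq> Pow E" using cov by blast
  then have "finite (path_edges ` \<P>)" using finE by (meson finite_Pow_iff finite_subset)
  then have finP: "finite \<P>" using injpe finite_imageD by blast
  have degsum: "deg E v = (\<Sum>P\<in>\<P>. pd P v)" for v
  proof -
    have "{e\<in>E. v\<in>e} = (\<Union>P\<in>\<P>. {e\<in>path_edges P. v\<in>e})" using cov by auto
    then have "deg E v = card (\<Union>P\<in>\<P>. {e\<in>path_edges P. v\<in>e})" by (simp add: deg_def)
    also have "\<dots> = (\<Sum>P\<in>\<P>. card {e\<in>path_edges P. v\<in>e})"
      by (rule card_UN_disjoint[OF finP]) (use finite_path_edges disj in \<open>auto simp: pairwise_def intro: finite_subset[OF _ finite_path_edges]\<close>)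
    finally show ?thesis by (simp add: pd_def)
  qed
  define s where "s v = (\<Sum>P\<in>P4. pd P v)" for v
  define h where "h v = (\<Sum>P\<in>Pr. pd P v)" for v
  have P4sub: "P4 \<subseteq> \<P>" by (auto simp: P4_def)
  have dsh: "deg E v = s v + h v" for v
    using degsum[of v] sum.subset_diff[OF P4sub finP, of "\<lambda>P. pd P v"]
    by (simp add: s_def h_def Pr_def)
  have pdv: "pd P v = (if v \<notin> set P then 0 else if v = hd P \<or> v = last P then 1 else 2)" if "P\<in>\<P>" for P v
    using pd_val[of P v] paths[OF that] by (simp add: is_path_def pd_def)
  have finPr: "finite Pr" using finP by (simp add: Pr_def)
  have OHsub: "{v\<in>V. odd (h v)} \<subseteq> (\<Union>P\<in>Pr. {hd P, last P})"
  proof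
    fix v assume "v \<in> {v\<in>V. odd (h v)}"
    then obtain P where "P\<in>Pr" "odd (pd P v)" using odd_sum_ex[of "\<lambda>P. pd P v" Pr] by (auto simp: h_def)
    moreover then have "P\<in>\<P>" by (simp add: Pr_def)
    ultimately show "v \<in> (\<Union>P\<in>Pr. {hd P, last P})" using pdv[of P v] by (auto split: if_splits)
  qed
  have "card {v\<in>V. odd (h v)} \<le> card (\<Union>P\<in>Pr. {hd P, last P})"
    by (rule card_mono[OF _ OHsub]) (use finPr in auto)
  also have "\<dots> \<le> (\<Sum>P\<in>Pr. card {hd P, last P})" by (rule card_UN_le[OF finPr])
  also have "\<dots> \<le> (\<Sum>P\<in>Pr. 2)" by (rule sum_mono) (simp add: card_insert_le_m1)
  finally have OHle: "card {v\<in>V. odd (h v)} \<le> 2 * card Pr" by simp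
  have evs: "even (s v)" if "v \<notin> U" for v
    unfolding s_def
  proof (rule dvd_sum)
    fix P assume "P \<in> P4"
    then have "P \<in> \<P>" "hd P \<noteq> v" "last P \<noteq> v" using ends that P4sub by auto
    then show "2 dvd pd P v" using pdv[of P v] by simp
  qed
  have injf: "inj_on f {1..l}" using bij by (rule bij_betw_imp_inj_on)
  have fimg: "f ` {1..l} = U - N" using bij by (rule bij_betw_imp_surj_on)
  have symU: "sym v \<in> symbols V E l" if "v\<in>U" for v
  proof (cases "v \<in> N")
    case True then show ?thesis by (simp add: sym_def symbols_def N_def)
  next
    case False
    then have "v \<in> f ` {1..l}" using fimg that by blast
    then have "inv_into {1..l} f v \<in> {1..l}" by (rule inv_into_into)
    then show ?thesis using False by (simp add: sym_def symbols_def)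
  qed
  have symInj: "inj_on sym U"
  proof (rule inj_onI)
    fix u v assume uv: "u\<in>U" "v\<in>U" "sym u = sym v"
    show "u = v"
    proof (cases "u\<in>N"; cases "v\<in>N")
      assume "u\<notin>N" "v\<notin>N"
      then have "u \<in> f ` {1..l}" "v \<in> f ` {1..l}" using fimg uv by auto
      moreover have "inv_into {1..l} f u = inv_into {1..l} f v" using uv \<open>u\<notin>N\<close> \<open>v\<notin>N\<close> by (simp add: sym_def)
      ultimately show ?thesis by (metis f_inv_into_f)
    qed (use uv in \<open>auto simp: sym_def\<close>)
  qed
  have symSurj: "symbols V E l \<subseteq> sym ` U"
  proof
    fix y assume "y \<in> symbols V E l"
    then consider v where "y = Inl v" "v \<in> N" | i where "y = Inr i" "i \<in> {1..l}"
      unfolding symbols_def N_def by blast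
    then show "y \<in> sym ` U"
    proof cases
      case 1 then show ?thesis using NU by (auto simp: sym_def)
    next
      case 2
      then have "f i \<in> U - N" using fimg by blast
      moreover have "sym (f i) = y" using 2 calculation inv_into_f_f[OF injf 2(2)] by (simp add: sym_def)
      ultimately show ?thesis by blast
    qed
  qed
  have Dsym: "pat_D E d (sym v) = deg E v" if "v\<in>U" for v
  proof (cases "v\<in>N")
    case True then show ?thesis by (simp add: sym_def pat_D_def)
  next
    case False
    then have "v \<in> f ` {1..l}" using fimg that by blast
    then show ?thesis using False dd inv_into_into[of v f "{1..l}"] f_inv_into_f[of v f "{1..l}"]
      by (simp add: sym_def pat_D_def)
  qed
  have trd: "trace_deg (tr P) (sym v) = pd P v" if "P\<in>P4" "v\<in>U" for P v
  proof -
    define Q where "Q = (if ori P then P else rev P)"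
    define L where "L = filter (\<lambda>v. v\<in>U) Q"
    have trL: "tr P = map sym L" by (simp add: tr_def trace_of_def L_def Q_def sym_def N_def)
    have PP: "P\<in>\<P>" using that P4sub by auto
    have Pne: "P \<noteq> []" using paths[OF PP] by (auto simp: is_path_def)
    have Qne: "Q \<noteq> []" using Pne by (simp add: Q_def)
    have hl: "{hd Q, last Q} = {hd P, last P}" using Pne by (auto simp: Q_def hd_rev last_rev)
    have hlU0: "hd P \<in> U" "last P \<in> U" using ends that(1) by auto
    have hlU: "hd Q \<in> U" "last Q \<in> U" using hl hlU0 by (metis insertI1 insertE singletonD insert_commute)+
    have setL: "set L = set P \<inter> U" by (auto simp: L_def Q_def)
    have hdL: "hd L = hd Q" using hd_filter[OF Qne, of "\<lambda>v. v\<in>U"] hlU by (simp add: L_def)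
    have lastL: "last L = last Q" using last_filter[OF Qne, of "\<lambda>v. v\<in>U"] hlU by (simp add: L_def)
    have Lne: "L \<noteq> []" using hlU Qne by (simp add: L_def filter_empty_conv) (metis hd_in_set)
    have LU: "set L \<subseteq> U" using setL by blast
    have mem: "(sym v \<in> set (map sym L)) = (v \<in> set P)"
      using setL LU that(2) inj_on_image_mem_iff[OF symInj that(2) LU] by auto
    have hdm: "(sym v = hd (map sym L)) = (v = hd Q)"
      using Lne hdL hlU symInj that(2) by (simp add: hd_map inj_on_eq_iff)
    have lastm: "(sym v = last (map sym L)) = (v = last Q)"
      using Lne lastL hlU symInj that(2) by (simp add: last_map inj_on_eq_iff)
    have "trace_deg (tr P) (sym v) = (if v \<notin> set P then 0 else if v = hd Q \<or> v = last Q then 1 else 2)"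
      unfolding trace_deg_def trL using mem hdm lastm by simp
    also have "\<dots> = pd P v"
    proof -
      have "(v \<in> {hd Q, last Q}) = (v \<in> {hd P, last P})" using hl by simp
      then have "(v = hd Q \<or> v = last Q) = (v = hd P \<or> v = last P)" by simp
      then show ?thesis using pdv[OF PP, of v] by simp
    qed
    finally show ?thesis .
  qed
  have Ssym: "pat_S \<T> (sym v) = s v" if "v\<in>U" for v
  proof -
    have injtr: "inj_on tr P4" using inj by (simp add: tr_def)
    have "pat_S \<T> (sym v) = (\<Sum>T\<in>tr ` P4. trace_deg T (sym v))" by (simp add: pat_S_def TT tr_def)
    also have "\<dots> = (\<Sum>P\<in>P4. trace_deg (tr P) (sym v))" by (rule sum.reindex_cong[OF injtr refl refl])
    also have "\<dots> = s v" unfolding s_def using trd that by (auto intro: sum.cong)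
    finally show ?thesis .
  qed
  have symbols_eq: "symbols V E l = sym ` U" using symSurj symU by blast
  define A where "A = {v\<in>V. even (deg E v) \<and> odd (s v)}"
  define B where "B = {v\<in>V. odd (deg E v) \<and> odd (s v)}"
  have AU: "A \<subseteq> U" and BU: "B \<subseteq> U" using evs by (auto simp: A_def B_def)
  have cA: "card {y\<in>symbols V E l. even (pat_D E d y) \<and> odd (pat_S \<T> y)} = card A"
  proof -
    have "{y\<in>symbols V E l. even (pat_D E d y) \<and> odd (pat_S \<T> y)} = sym ` A"
      unfolding symbols_eq using AU UV Dsym Ssym by (auto simp: A_def)
    then show ?thesis using card_image[OF inj_on_subset[OF symInj AU]] by simp
  qed
  have cB: "card {y\<in>symbols V E l. odd (pat_D E d y) \<and> odd (pat_S \<T> y)} = card B"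
  proof -
    have "{y\<in>symbols V E l. odd (pat_D E d y) \<and> odd (pat_S \<T> y)} = sym ` B"
      unfolding symbols_eq using BU UV Dsym Ssym by (auto simp: B_def)
    then show ?thesis using card_image[OF inj_on_subset[OF symInj BU]] by simp
  qed
  define OH where "OH = {v\<in>V. odd (h v)}"
  define OG where "OG = {v\<in>V. odd (deg E v)}"
  have eqU: "OH \<union> B = OG \<union> A" by (auto simp: OH_def OG_def A_def B_def dsh)
  have d1: "OH \<inter> B = {}" by (auto simp: OH_def B_def dsh)
  have d2: "OG \<inter> A = {}" by (auto simp: OG_def A_def)
  have fins: "finite OH" "finite B" "finite OG" "finite A" using finV
    by (auto simp: OH_def OG_def A_def B_def)
  have key: "card OH + card B = card OG + card A"
    using card_Un_disjoint[OF fins(1,2) d1] card_Un_disjoint[OF fins(3,4) d2] eqU by simp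
  have cP: "card \<P> = card P4 + card Pr"
    using card_Diff_subset[OF finite_subset[OF P4sub finP] P4sub] card_mono[OF finP P4sub]
    by (simp add: Pr_def)
  have cT: "card \<T> = card P4" using card_image[OF inj] by (simp add: TT)
  have ov: "odd_vertices V E = card OG" by (simp add: odd_vertices_def OG_def)
  have op: "odd_pattern V E l \<T> d = int (card A) - int (card B)"
    by (simp add: odd_pattern_def cA cB)
  have "card OH \<le> 2 * card Pr" using OHle by (simp add: OH_def)
  then show ?thesis using key cP cT ov op by simp
qed

end
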